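(* Let $b\ge0$ and $0=x_0\le x_1\le\dots\le x_{n-1}\le x_n=b$. Let $f_j:[x_{j-1},x_j]\to\mathbb F$ be continuous for $j=1,\dots,n$, and let $c_k^j$ ($j=0,\dots,n-1$, $k=0,\dots,j$) be positive real constants with $c_0^j=1$. Then there exists a sequence of polynomials $(p_m)_{m\in\mathbb N}$ such that, for every $j=1,\dots,n$, $$\sum_{k=0}^{j-1}c_k^{j-1}p_m^{(k)}\longrightarrow f_j\quad\text{uniformly on }[x_{j-1},x_j]\text{ as }m\to\infty,$$ i.e. $p_m\to f_1$ on $[x_0,x_1]$, $p_m+c_1^1p_m'\to f_2$ on $[x_1,x_2]$, $\dots$, $p_m+c_1^{n-1}p_m'+\dots+c_{n-1}^{n-1}p_m^{(n-1)}\to f_n$ on $[x_{n-1},x_n]$.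
   Context: $\mathbb F\in\{\mathbb R,\mathbb C\}$. Intervals $[x_{j-1},x_j]$ may be degenerate (single points), in which case uniform convergence on them means convergence at that point. *)

theory Defs
  imports "HOL-Analysis.Analysis" "HOL-Computational_Algebra.Polynomial"
begin

end

theory Submission
  imports Defs
begin

lemma rpf_poly:
  fixes g :: "real \<Rightarrow> real"
  assumes "real_polynomial_function g"
  shows "\<exists>p. \<forall>x. g x = poly p x"
  using assms
proof induction
  case (linear f)
  then obtain c where "f = (\<lambda>x. x * c)" using real_bounded_linear by blast
  then show ?case by (intro exI[of _ "[:0, c:]"]) (simp add: mult.commute)
next
  case (const c)
  then show ?case by (intro exI[of _ "[:c:]"]) simp
next
  case (add f g)
  then obtain p q where "\<forall>x. f x = poly p x" "\<forall>x. g x = poly q x" by blast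
  then show ?case by (intro exI[of _ "p + q"]) simp
next
  case (mult f g)
  then obtain p q where "\<forall>x. f x = poly p x" "\<forall>x. g x = poly q x" by blast
  then show ?case by (intro exI[of _ "p * q"]) simp
qed

lemma weier_poly:
  fixes f :: "real \<Rightarrow> real"
  assumes "compact S" "continuous_on S f" "0 < e"
  shows "\<exists>p. \<forall>x\<in>S. \<bar>f x - poly p x\<bar> < e"
proof -
  obtain g where g: "real_polynomial_function g" "\<And>x. x \<in> S \<Longrightarrow> \<bar>f x - g x\<bar> < e"
    using Stone_Weierstrass_real_polynomial_function[OF assms] by blast
  obtain p where "\<forall>x. g x = poly p x" using rpf_poly[OF g(1)] by blast
  then show ?thesis using g(2) by auto
qed

lemma hpd_diff: "(pderiv ^^ n) (p - q) = (pderiv ^^ n) p - (pderiv ^^ n) (q :: real poly)"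
  by (induction n) (simp_all add: pderiv_diff)

lemma pderiv_sum': "pderiv (sum f A) = (\<Sum>x\<in>A. pderiv (f x))"
  using higher_pderiv_sum[of 1 f A] by simp

lemma antideriv1:
  fixes p :: "real poly"
  shows "\<exists>r. pderiv r = p \<and> poly r a = 0"
proof -
  define r0 where "r0 = (\<Sum>i\<le>degree p. monom (coeff p i / real (Suc i)) (Suc i))"
  have "pderiv r0 = (\<Sum>i\<le>degree p. monom (coeff p i) i)"
    unfolding r0_def pderiv_sum' pderiv_monom
    by (intro sum.cong) (auto simp del: of_nat_Suc)
  also have "\<dots> = p" by (rule poly_as_sum_of_monoms)
  finally have d: "pderiv r0 = p" .
  show ?thesis
    by (intro exI[of _ "r0 - [:poly r0 a:]"]) (simp add: pderiv_diff d)
qed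

lemma antiderivN:
  fixes Q :: "real poly"
  shows "\<exists>r. (pderiv ^^ N) r = Q \<and> (\<forall>k<N. poly ((pderiv ^^ k) r) a = 0)"
proof (induction N)
  case 0
  then show ?case by auto
next
  case (Suc N)
  then obtain r' where r': "(pderiv ^^ N) r' = Q" "\<forall>k<N. poly ((pderiv ^^ k) r') a = 0" by blast
  obtain r where r: "pderiv r = r'" "poly r a = 0" using antideriv1 by blast
  have "(pderiv ^^ Suc N) r = Q" using r r' by (simp add: funpow_Suc_right del: funpow.simps)
  moreover have "\<forall>k<Suc N. poly ((pderiv ^^ k) r) a = 0"
  proof (intro allI impI)
    fix k assume "k < Suc N"
    then show "poly ((pderiv ^^ k) r) a = 0"
      using r r' by (cases k) (simp_all add: funpow_Suc_right del: funpow.simps)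
  qed
  ultimately show ?case by blast
qed

lemma poly_diff_bound:
  fixes p :: "real poly"
  assumes "\<forall>u\<in>{lo..hi}. \<bar>poly (pderiv p) u\<bar> \<le> B" "s \<in> {lo..hi}" "t \<in> {lo..hi}"
  shows "\<bar>poly p t - poly p s\<bar> \<le> B * \<bar>t - s\<bar>"
proof -
  have "{min s t..max s t} \<subseteq> {lo..hi}" using assms(2,3) by auto
  then obtain u where u: "u \<in> {lo..hi}" "poly p t - poly p s = (t - s) * poly (pderiv p) u"
    using poly_MVT'[of s t "{lo..hi}" p] by blast
  have "\<bar>poly p t - poly p s\<bar> = \<bar>t - s\<bar> * \<bar>poly (pderiv p) u\<bar>" using u by (simp add: abs_mult)
  also have "\<dots> \<le> \<bar>t - s\<bar> * B" using assms(1) u(1) by (simp add: mult_left_mono)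
  finally show ?thesis by (simp add: mult.commute)
qed

lemma imvt:
  fixes w :: "real poly"
  assumes "a \<in> {lo..hi}" "\<forall>k<N. poly ((pderiv ^^ k) w) a = 0"
    "\<forall>t\<in>{lo..hi}. \<bar>poly ((pderiv ^^ N) w) t\<bar> \<le> \<eta>"
  shows "\<forall>m\<le>N. \<forall>t\<in>{lo..hi}. \<bar>poly ((pderiv ^^ (N - m)) w) t\<bar> \<le> \<eta> * (hi - lo) ^ m"
proof (intro allI impI)
  fix m assume "m \<le> N"
  then show "\<forall>t\<in>{lo..hi}. \<bar>poly ((pderiv ^^ (N - m)) w) t\<bar> \<le> \<eta> * (hi - lo) ^ m"
  proof (induction m)
    case 0
    then show ?case using assms(3) by simp
  next
    case (Suc m)
    then have IH: "\<forall>t\<in>{lo..hi}. \<bar>poly (pderiv ((pderiv ^^ (N - Suc m)) w)) t\<bar> \<le> \<eta> * (hi - lo) ^ m"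
      by (metis Suc_diff_Suc Suc_le_lessD Suc_leD funpow.simps(2) o_apply)
    have z: "poly ((pderiv ^^ (N - Suc m)) w) a = 0" using assms(2) Suc.prems by auto
    show ?case
    proof
      fix t assume t: "t \<in> {lo..hi}"
      have "\<bar>poly ((pderiv ^^ (N - Suc m)) w) t - poly ((pderiv ^^ (N - Suc m)) w) a\<bar>
            \<le> \<eta> * (hi - lo) ^ m * \<bar>t - a\<bar>"
        by (rule poly_diff_bound[OF IH assms(1) t])
      also have "\<dots> \<le> \<eta> * (hi - lo) ^ m * (hi - lo)"
      proof (rule mult_left_mono)
        show "\<bar>t - a\<bar> \<le> hi - lo" using t assms(1) by auto
        have "0 \<le> \<bar>poly ((pderiv ^^ N) w) lo\<bar>" by simp
        then have "0 \<le> \<eta>" using assms(3) assms(1) by force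
        then show "0 \<le> \<eta> * (hi - lo) ^ m" using assms(1) by simp
      qed
      finally show "\<bar>poly ((pderiv ^^ (N - Suc m)) w) t\<bar> \<le> \<eta> * (hi - lo) ^ Suc m"
        using z by (simp add: ac_simps)
    qed
  qed
qed

definition Lop :: "(nat \<Rightarrow> real) \<Rightarrow> nat \<Rightarrow> real poly \<Rightarrow> real poly" where
  "Lop c N p = (\<Sum>k\<le>N. smult (c k) ((pderiv ^^ k) p))"

definition Eop :: "(nat \<Rightarrow> real) \<Rightarrow> nat \<Rightarrow> real poly \<Rightarrow> real poly" where
  "Eop c N p = (\<Sum>i<N. smult (c (Suc i)) ((pderiv ^^ (Suc i)) p))"

lemma poly_Lop: "poly (Lop c N p) t = (\<Sum>k\<le>N. c k * poly ((pderiv ^^ k) p) t)"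
  by (simp add: Lop_def poly_sum)

lemma Lop_Eop: "c 0 = 1 \<Longrightarrow> Lop c N p = p + Eop c N p"
  unfolding Lop_def Eop_def by (subst sum.atMost_shift) simp

lemma smult_sum_right: "smult a (sum f A) = (\<Sum>x\<in>A. smult a (f x))"
  by (induction A rule: infinite_finite_induct) (simp_all add: smult_add_right)

lemma Eop_add: "Eop c N (p + q) = Eop c N p + Eop c N q"
  unfolding Eop_def by (simp add: higher_pderiv_add smult_add_right sum.distrib del: funpow.simps)

lemma Eop_smult: "Eop c N (smult a p) = smult a (Eop c N p)"
  unfolding Eop_def by (simp add: higher_pderiv_smult smult_sum_right ac_simps del: funpow.simps)

lemma Lop_add: "Lop c N (p + q) = Lop c N p + Lop c N q"
  unfolding Lop_def by (simp add: higher_pderiv_add smult_add_right sum.distrib)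

lemma Lop_diff: "Lop c N (p - q) = Lop c N p - Lop c N q"
  unfolding Lop_def by (simp add: hpd_diff smult_diff_right sum_subtractf)

lemma funpow_comb: "(f ^^ m) ((f ^^ n) x) = (f ^^ (m + n)) x"
  by (simp add: funpow_add)

lemma Eop_nil:
  assumes "(pderiv ^^ (Suc m)) p = 0"
  shows "(pderiv ^^ m) (Eop c N p) = 0"
proof -
  have "(pderiv ^^ m) ((pderiv ^^ Suc i) p) = 0" for i
  proof -
    have "(pderiv ^^ m) ((pderiv ^^ Suc i) p) = (pderiv ^^ (m + Suc i)) p"
      by (rule funpow_comb)
    also have "m + Suc i = i + Suc m" by simp
    also have "(pderiv ^^ (i + Suc m)) p = (pderiv ^^ i) ((pderiv ^^ (Suc m)) p)" by (rule funpow_comb[symmetric])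
    finally show ?thesis using assms by simp
  qed
  then show ?thesis unfolding Eop_def by (simp add: higher_pderiv_sum higher_pderiv_smult)
qed

lemma Eop_pow_nil:
  "(pderiv ^^ (m + j)) p = 0 \<Longrightarrow> (pderiv ^^ m) ((Eop c N ^^ j) p) = 0"
proof (induction j arbitrary: m)
  case 0
  then show ?case by simp
next
  case (Suc j)
  have "(pderiv ^^ (Suc m)) ((Eop c N ^^ j) p) = 0" using Suc.IH[of "Suc m"] Suc.prems by simp
  then show ?case by (simp add: Eop_nil)
qed

lemma higher_pderiv_degree: "(pderiv ^^ (Suc (degree h))) (h :: real poly) = 0"
proof -
  have "degree ((pderiv ^^ degree h) h) = 0" by (simp add: degree_higher_pderiv)
  then show ?thesis by (simp add: pderiv_eq_0_iff)
qed

lemma Lop_inv: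
  assumes "c 0 = 1"
  shows "\<exists>s. Lop c N s = h"
proof -
  define E where "E = Eop c N"
  define S where "S d = (\<Sum>i<d. smult ((-1) ^ i) ((E ^^ i) h))" for d
  have key: "S d + E (S d) = h - smult ((-1) ^ d) ((E ^^ d) h)" for d
  proof (induction d)
    case 0
    then show ?case by (simp add: S_def E_def Eop_def)
  next
    case (Suc d)
    have "S (Suc d) = S d + smult ((-1) ^ d) ((E ^^ d) h)" by (simp add: S_def)
    moreover have "E (S d + smult ((-1) ^ d) ((E ^^ d) h)) = E (S d) + smult ((-1) ^ d) ((E ^^ Suc d) h)"
      by (simp add: E_def Eop_add Eop_smult)
    ultimately show ?case using Suc.IH by (simp add: algebra_simps)
  qed
  have "(E ^^ Suc (degree h)) h = 0"
    using Eop_pow_nil[of 0 "Suc (degree h)" h c N] higher_pderiv_degree[of h] by (simp add: E_def)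
  then have "Lop c N (S (Suc (degree h))) = h"
    using key[of "Suc (degree h)"] by (simp add: Lop_Eop[of c, OF assms] E_def)
  then show ?thesis by blast
qed

function aseq :: "(nat \<Rightarrow> real) \<Rightarrow> nat \<Rightarrow> (nat \<Rightarrow> real) \<Rightarrow> nat \<Rightarrow> real" where
  "aseq c N d i = (if i < N then d i else - (\<Sum>k<N. c k * aseq c N d (i - N + k)) / c N)"
  by auto
termination by (relation "Wellfounded.measure (\<lambda>(c, N, d, i). i)") auto

declare aseq.simps[simp del]

lemma aseq_rec:
  assumes "c N \<noteq> 0"
  shows "(\<Sum>k\<le>N. c k * aseq c N d (i + k)) = 0"
proof -
  have "aseq c N d (i + N) = - (\<Sum>k<N. c k * aseq c N d (i + k)) / c N"
    by (subst aseq.simps) simp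
  then have "c N * aseq c N d (i + N) = - (\<Sum>k<N. c k * aseq c N d (i + k))"
    using assms by simp
  then show ?thesis by (simp add: lessThan_Suc_atMost[symmetric])
qed

lemma aseq_bound:
  assumes "c N > 0" "\<forall>i<N. \<bar>d i\<bar> \<le> A" "A \<ge> 0" "R = max 1 (\<Sum>k<N. \<bar>c k\<bar> / c N)"
  shows "\<bar>aseq c N d i\<bar> \<le> A * R ^ i"
proof (induction i rule: less_induct)
  case (less i)
  have R1: "R \<ge> 1" using assms(4) by simp
  show ?case
  proof (cases "i < N")
    case True
    then have "\<bar>aseq c N d i\<bar> \<le> A" using assms(2) by (subst aseq.simps) simp
    moreover have "A \<le> A * R ^ i" using R1 assms(3) by (simp add: mult_le_cancel_left1)
    ultimately show ?thesis by linarith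
  next
    case False
    show ?thesis
    proof (cases "i = 0")
      case True
      then have "N = 0" using False by simp
      then show ?thesis using True assms(3) by (subst aseq.simps) simp
    next
      case i0: False
      have Ai: "aseq c N d i = - (\<Sum>k<N. c k * aseq c N d (i - N + k)) / c N"
        using False by (subst aseq.simps) simp
      have "\<bar>aseq c N d i\<bar> = \<bar>\<Sum>k<N. c k * aseq c N d (i - N + k)\<bar> / c N"
        using assms(1) Ai by simp
      also have "\<dots> \<le> (\<Sum>k<N. \<bar>c k\<bar> * (A * R ^ (i - 1))) / c N"
      proof (rule divide_right_mono)
        show "0 \<le> c N" using assms(1) by simp
        have "\<bar>\<Sum>k<N. c k * aseq c N d (i - N + k)\<bar> \<le> (\<Sum>k<N. \<bar>c k * aseq c N d (i - N + k)\<bar>)"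
          by (rule sum_abs)
        also have "\<dots> \<le> (\<Sum>k<N. \<bar>c k\<bar> * (A * R ^ (i - 1)))"
        proof (rule sum_mono)
          fix k assume k: "k \<in> {..<N}"
          then have lt: "i - N + k < i" using False by auto
          have "\<bar>aseq c N d (i - N + k)\<bar> \<le> A * R ^ (i - N + k)" using less.IH[OF lt] .
          also have "\<dots> \<le> A * R ^ (i - 1)"
          proof (rule mult_left_mono)
            show "R ^ (i - N + k) \<le> R ^ (i - 1)" using R1 k False by (intro power_increasing) auto
            show "0 \<le> A" using assms(3) .
          qed
          finally show "\<bar>c k * aseq c N d (i - N + k)\<bar> \<le> \<bar>c k\<bar> * (A * R ^ (i - 1))"
            by (simp add: abs_mult mult_left_mono)
        qed
        finally show "\<bar>\<Sum>k<N. c k * aseq c N d (i - N + k)\<bar> \<le> (\<Sum>k<N. \<bar>c k\<bar> * (A * R ^ (i - 1)))" .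
      qed
      also have "\<dots> = (\<Sum>k<N. \<bar>c k\<bar> / c N) * (A * R ^ (i - 1))"
        by (simp add: sum_divide_distrib[symmetric] sum_distrib_right)
      also have "\<dots> \<le> R * (A * R ^ (i - 1))"
      proof (rule mult_right_mono)
        show "(\<Sum>k<N. \<bar>c k\<bar> / c N) \<le> R" using assms(4) by simp
        show "0 \<le> A * R ^ (i - 1)"
          using assms(3) R1 by simp
      qed
      also have "\<dots> = A * R ^ i" using i0 by (cases i) auto
      finally show ?thesis .
    qed
  qed
qed

definition Ypoly :: "(nat \<Rightarrow> real) \<Rightarrow> nat \<Rightarrow> real \<Rightarrow> real poly" where
  "Ypoly \<beta> M a = (\<Sum>i<M. smult (\<beta> i / fact i) ([:-a, 1:] ^ i))"

lemma poly_Ypoly: "poly (Ypoly \<beta> M a) t = (\<Sum>i<M. \<beta> i / fact i * (t - a) ^ i)"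
  by (simp add: Ypoly_def poly_sum poly_power)

lemma Y_pderiv: "pderiv (Ypoly \<beta> M a) = Ypoly (\<lambda>i. \<beta> (Suc i)) (M - 1) a"
proof (cases M)
  case 0
  then show ?thesis by (simp add: Ypoly_def)
next
  case (Suc M')
  have "pderiv (Ypoly \<beta> M a) = (\<Sum>i<M'. pderiv (smult (\<beta> (Suc i) / fact (Suc i)) ([:-a, 1:] ^ Suc i)))"
    unfolding Ypoly_def Suc sum.lessThan_Suc_shift by (simp add: pderiv_sum' pderiv_add del: power_Suc)
  also have "\<dots> = (\<Sum>i<M'. smult (\<beta> (Suc i) / fact i) ([:-a, 1:] ^ i))"
  proof (rule sum.cong)
    fix i
    have "pderiv (smult (\<beta> (Suc i) / fact (Suc i)) ([:-a, 1:] ^ Suc i))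
       = smult (\<beta> (Suc i) / fact (Suc i) * real (Suc i)) ([:-a, 1:] ^ i)"
      by (simp add: pderiv_smult pderiv_power_Suc pderiv_pCons del: power_Suc of_nat_Suc)
    also have "\<beta> (Suc i) / fact (Suc i) * real (Suc i) = \<beta> (Suc i) / fact i"
      by (simp add: fact_Suc del: of_nat_Suc)
    finally show "pderiv (smult (\<beta> (Suc i) / fact (Suc i)) ([:-a, 1:] ^ Suc i)) = smult (\<beta> (Suc i) / fact i) ([:-a, 1:] ^ i)" .
  qed simp
  finally show ?thesis by (simp add: Ypoly_def Suc)
qed

lemma Y_hpderiv: "(pderiv ^^ k) (Ypoly \<beta> M a) = Ypoly (\<lambda>i. \<beta> (i + k)) (M - k) a"
proof (induction k arbitrary: \<beta> M)
  case 0
  then show ?case by simp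
next
  case (Suc k)
  have "(pderiv ^^ Suc k) (Ypoly \<beta> M a) = (pderiv ^^ k) (pderiv (Ypoly \<beta> M a))"
    by (simp add: funpow_Suc_right del: funpow.simps)
  also have "\<dots> = Ypoly (\<lambda>i. \<beta> (i + Suc k)) (M - Suc k) a"
    unfolding Y_pderiv Suc.IH by simp
  finally show ?case .
qed

lemma sum_zero_pow: "n > 0 \<Longrightarrow> (\<Sum>i<n. f i * (0::real) ^ i) = f 0"
  by (cases n) (simp_all add: sum.lessThan_Suc_shift del: sum.lessThan_Suc)

lemma homog_approx:
  assumes cN: "c N > 0" and B: "0 \<le> B" and e: "\<epsilon> > 0"
  shows "\<exists>y. (\<forall>k<N. poly ((pderiv ^^ k) y) a = d k) \<and> (\<forall>t\<in>{a..a+B}. \<bar>poly (Lop c N y) t\<bar> \<le> \<epsilon>)"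
proof -
  define A where "A = (\<Sum>i<N. \<bar>d i\<bar>)"
  define R where "R = max 1 (\<Sum>k<N. \<bar>c k\<bar> / c N)"
  define \<alpha> where "\<alpha> = aseq c N d"
  define C where "C = (\<Sum>k\<le>N. \<bar>c k\<bar>)"
  have A0: "A \<ge> 0" unfolding A_def by (simp add: sum_nonneg)
  have dA: "\<forall>i<N. \<bar>d i\<bar> \<le> A" unfolding A_def
    by (auto intro: member_le_sum)
  have R1: "R \<ge> 1" unfolding R_def by simp
  have C0: "C \<ge> 0" unfolding C_def by (simp add: sum_nonneg)
  have \<alpha>b: "\<bar>\<alpha> i\<bar> \<le> A * R ^ i" for i
    unfolding \<alpha>_def using aseq_bound[OF cN dA A0 R_def] .
  define K where "K = C * A * R ^ N * real N + 1"
  have K1: "K \<ge> 1" unfolding K_def using A0 R1 C0 by simp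
  define \<eta> where "\<eta> = \<epsilon> / K"
  have \<eta>0: "\<eta> > 0" unfolding \<eta>_def using e K1 by simp
  define z where "z i = (R * B) ^ i / fact i" for i
  have z0: "z i \<ge> 0" for i unfolding z_def using R1 B by simp
  have "z \<longlonglongrightarrow> 0"
  proof -
    have "summable (\<lambda>n. inverse (fact n) * (R * B) ^ n)" by (rule summable_exp)
    then have "(\<lambda>n. inverse (fact n) * (R * B) ^ n) \<longlonglongrightarrow> 0" by (rule summable_LIMSEQ_zero)
    then show ?thesis unfolding z_def by (simp add: divide_inverse mult.commute)
  qed
  then obtain M0 where M0: "\<forall>i\<ge>M0. norm (z i - 0) < \<eta>" using LIMSEQ_iff \<eta>0 by blast
  then have zM: "\<And>i. i \<ge> M0 \<Longrightarrow> z i \<le> \<eta>" using z0 by (metis diff_zero less_eq_real_def real_norm_def abs_of_nonneg)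
  define M where "M = M0 + N"
  define y where "y = Ypoly \<alpha> M a"
  have der: "poly ((pderiv ^^ k) y) t = (\<Sum>i<M - k. \<alpha> (i + k) / fact i * (t - a) ^ i)" for k t
    unfolding y_def Y_hpderiv poly_Ypoly ..
  have data: "\<forall>k<N. poly ((pderiv ^^ k) y) a = d k"
  proof (intro allI impI)
    fix k assume k: "k < N"
    have "poly ((pderiv ^^ k) y) a = \<alpha> k"
      unfolding der using sum_zero_pow[of "M - k" "\<lambda>i. \<alpha> (i + k) / fact i"] k by (simp add: M_def)
    also have "\<alpha> k = d k" unfolding \<alpha>_def using k by (subst aseq.simps) simp
    finally show "poly ((pderiv ^^ k) y) a = d k" .
  qed
  have bound: "\<bar>poly (Lop c N y) t\<bar> \<le> \<epsilon>" if t: "t \<in> {a..a+B}" for t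
  proof -
    define \<tau> where "\<tau> = t - a"
    have \<tau>: "0 \<le> \<tau>" "\<tau> \<le> B" using t unfolding \<tau>_def by auto
    define G where "G k i = \<alpha> (i + k) / fact i * \<tau> ^ i" for k i
    have split: "(\<Sum>i<M - k. G k i) = (\<Sum>i<M0. G k i) + (\<Sum>i\<in>{M0..<M0 + (N - k)}. G k i)" if "k \<le> N" for k
    proof -
      have "M - k = M0 + (N - k)" using that by (simp add: M_def)
      then show ?thesis
        by (simp add: atLeast0LessThan[symmetric] sum.atLeastLessThan_concat)
    qed
    have "poly (Lop c N y) t = (\<Sum>k\<le>N. c k * (\<Sum>i<M - k. G k i))"
      unfolding poly_Lop der G_def \<tau>_def ..
    also have "\<dots> = (\<Sum>k\<le>N. c k * (\<Sum>i<M0. G k i)) + (\<Sum>k\<le>N. c k * (\<Sum>i\<in>{M0..<M0 + (N - k)}. G k i))"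
      by (simp add: split distrib_left sum.distrib)
    also have "(\<Sum>k\<le>N. c k * (\<Sum>i<M0. G k i)) = 0"
    proof -
      have "(\<Sum>k\<le>N. c k * (\<Sum>i<M0. G k i)) = (\<Sum>k\<le>N. \<Sum>i<M0. c k * G k i)"
        by (simp add: sum_distrib_left)
      also have "\<dots> = (\<Sum>i<M0. \<Sum>k\<le>N. c k * G k i)" by (rule sum.swap)
      also have "\<dots> = (\<Sum>i<M0. (\<tau> ^ i / fact i) * (\<Sum>k\<le>N. c k * \<alpha> (i + k)))"
        by (simp add: G_def sum_distrib_left ac_simps)
      also have "\<dots> = 0" using aseq_rec[of c N d] cN by (simp add: \<alpha>_def)
      finally show ?thesis .
    qed
    finally have eq: "poly (Lop c N y) t = (\<Sum>k\<le>N. c k * (\<Sum>i\<in>{M0..<M0 + (N - k)}. G k i))" by simp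
    have Gb: "\<bar>G k i\<bar> \<le> A * R ^ N * \<eta>" if "k \<le> N" "i \<ge> M0" for k i
    proof -
      have "\<bar>G k i\<bar> = \<bar>\<alpha> (i + k)\<bar> * \<tau> ^ i / fact i" unfolding G_def using \<tau> by (simp add: abs_mult)
      also have "\<dots> \<le> (A * R ^ (i + k)) * B ^ i / fact i"
        by (intro divide_right_mono mult_mono \<alpha>b power_mono) (use \<tau> A0 R1 in auto)
      also have "\<dots> = A * R ^ k * z i" unfolding z_def by (simp add: power_add power_mult_distrib)
      also have "\<dots> \<le> A * R ^ N * \<eta>"
        by (intro mult_mono power_increasing zM) (use that A0 R1 z0 in auto)
      finally show ?thesis .
    qed
    have inner: "\<bar>\<Sum>i\<in>{M0..<M0 + (N - k)}. G k i\<bar> \<le> real N * (A * R ^ N * \<eta>)" if "k \<le> N" for k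
    proof -
      have "\<bar>\<Sum>i\<in>{M0..<M0 + (N - k)}. G k i\<bar> \<le> (\<Sum>i\<in>{M0..<M0 + (N - k)}. \<bar>G k i\<bar>)" by (rule sum_abs)
      also have "\<dots> \<le> (\<Sum>i\<in>{M0..<M0 + (N - k)}. A * R ^ N * \<eta>)"
        by (intro sum_mono Gb that) auto
      also have "\<dots> = real (N - k) * (A * R ^ N * \<eta>)" by simp
      also have "\<dots> \<le> real N * (A * R ^ N * \<eta>)"
        by (intro mult_right_mono) (use A0 R1 \<eta>0 in auto)
      finally show ?thesis .
    qed
    have "\<bar>poly (Lop c N y) t\<bar> \<le> (\<Sum>k\<le>N. \<bar>c k * (\<Sum>i\<in>{M0..<M0 + (N - k)}. G k i)\<bar>)"
      unfolding eq by (rule sum_abs)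
    also have "\<dots> \<le> (\<Sum>k\<le>N. \<bar>c k\<bar> * (real N * (A * R ^ N * \<eta>)))"
    proof (rule sum_mono)
      fix k assume "k \<in> {..N}"
      then have "k \<le> N" by simp
      then show "\<bar>c k * (\<Sum>i\<in>{M0..<M0 + (N - k)}. G k i)\<bar> \<le> \<bar>c k\<bar> * (real N * (A * R ^ N * \<eta>))"
        unfolding abs_mult by (intro mult_left_mono inner) auto
    qed
    also have "\<dots> = (\<Sum>k\<le>N. \<bar>c k\<bar>) * (real N * (A * R ^ N * \<eta>))" by (rule sum_distrib_right[symmetric])
    also have "\<dots> = (K - 1) * \<eta>" by (simp add: K_def C_def ac_simps)
    also have "\<dots> \<le> \<epsilon>" unfolding \<eta>_def using K1 e by (simp add: field_simps)
    finally show ?thesis .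
  qed
  show ?thesis using data bound by blast
qed

lemma KL:
  fixes c :: "nat \<Rightarrow> real" and g :: "real \<Rightarrow> real"
  assumes c0: "c 0 = 1" and cN: "c N > 0" and a0: "0 \<le> a" and ab: "a \<le> b"
    and g: "continuous_on {a..b} g" and e: "\<epsilon> > 0" and dl: "\<delta> > 0"
  shows "\<exists>r. (\<forall>k<N. \<forall>t\<in>{0..a}. \<bar>poly ((pderiv ^^ k) r) t\<bar> \<le> \<delta>)
           \<and> (\<forall>t\<in>{a..b}. \<bar>poly (Lop c N r) t - g t\<bar> \<le> \<epsilon>)"
proof -
  obtain h where h: "\<forall>t\<in>{a..b}. \<bar>g t - poly h t\<bar> < \<epsilon> / 3"
    using weier_poly[OF compact_Icc g, of "\<epsilon>/3"] e by auto
  obtain s where s: "Lop c N s = h" using Lop_inv[of c, OF c0] by blast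
  obtain y where y: "\<forall>k<N. poly ((pderiv ^^ k) y) a = poly ((pderiv ^^ k) s) a"
    "\<forall>t\<in>{a..a + (b - a)}. \<bar>poly (Lop c N y) t\<bar> \<le> \<epsilon> / 3"
    using homog_approx[of c N "b - a" "\<epsilon>/3" a "\<lambda>k. poly ((pderiv ^^ k) s) a"] ab e cN by auto
  define r0 where "r0 = s - y"
  have r0a: "\<forall>k<N. poly ((pderiv ^^ k) r0) a = 0" using y(1) by (simp add: r0_def hpd_diff)
  have r0g: "\<bar>poly (Lop c N r0) t - g t\<bar> \<le> 2 * \<epsilon> / 3" if t: "t \<in> {a..b}" for t
  proof -
    have "poly (Lop c N r0) t - g t = (poly h t - g t) - poly (Lop c N y) t"
      by (simp add: r0_def Lop_diff s)
    moreover have "\<bar>poly h t - g t\<bar> < \<epsilon> / 3" using h t by (simp add: abs_minus_commute)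
    moreover have "\<bar>poly (Lop c N y) t\<bar> \<le> \<epsilon> / 3" using y(2) t by simp
    ultimately show ?thesis by linarith
  qed
  define P where "P = (pderiv ^^ N) r0"
  define Mv where "Mv = \<bar>poly P a\<bar>"
  define Kb where "Kb = max 1 b"
  define C where "C = (\<Sum>k\<le>N. \<bar>c k\<bar>)"
  have Kb1: "Kb \<ge> 1" "b \<le> Kb" unfolding Kb_def by auto
  have C0: "C \<ge> 0" unfolding C_def by (simp add: sum_nonneg)
  have Mv0: "Mv \<ge> 0" unfolding Mv_def by simp
  define \<eta> where "\<eta> = min 1 (min (\<epsilon> / (3 * (C + 1) * Kb ^ N)) (\<delta> / (2 * Kb ^ Suc N)))"
  have KbN: "Kb ^ N \<ge> 1" "Kb ^ Suc N \<ge> 1" by (rule one_le_power[OF Kb1(1)])+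
  have \<eta>0: "\<eta> > 0" unfolding \<eta>_def using e dl C0 KbN by auto
  have \<eta>1: "\<eta> \<le> 1" unfolding \<eta>_def by simp
  have \<eta>2: "\<eta> * (3 * (C + 1) * Kb ^ N) \<le> \<epsilon>"
  proof -
    have "\<eta> \<le> \<epsilon> / (3 * (C + 1) * Kb ^ N)" unfolding \<eta>_def by simp
    moreover have "3 * (C + 1) * Kb ^ N > 0" using C0 KbN by simp
    ultimately show ?thesis by (simp add: pos_le_divide_eq)
  qed
  have \<eta>3: "\<eta> * Kb ^ Suc N \<le> \<delta> / 2"
  proof -
    have "\<eta> \<le> \<delta> / (2 * Kb ^ Suc N)" unfolding \<eta>_def by simp
    moreover have "2 * Kb ^ Suc N > 0" using KbN by linarith
    ultimately show ?thesis by (simp add: pos_le_divide_eq del: power_Suc)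
  qed
  define \<theta> where "\<theta> = \<delta> / (2 * Kb ^ N * (Mv + 1))"
  have \<theta>0: "\<theta> > 0" unfolding \<theta>_def using dl KbN Mv0 by simp
  have \<theta>1: "\<theta> * (Mv + 1) * Kb ^ N = \<delta> / 2"
  proof -
    have "2 * Kb ^ N * (Mv + 1) \<noteq> 0" using KbN Mv0 by auto
    then show ?thesis unfolding \<theta>_def by (simp add: divide_simps)
  qed
  define \<psi> where "\<psi> t = poly P (max t a) * min 1 (max 0 (1 + (t - a) / \<theta>))" for t
  have \<psi>c: "continuous_on {0..b} \<psi>" unfolding \<psi>_def using \<theta>0 by (intro continuous_intros) auto
  obtain Q where Q: "\<forall>t\<in>{0..b}. \<bar>\<psi> t - poly Q t\<bar> < \<eta>"
    using weier_poly[OF compact_Icc \<psi>c \<eta>0] by blast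
  obtain r where r: "(pderiv ^^ N) r = Q" "\<forall>k<N. poly ((pderiv ^^ k) r) a = 0"
    using antiderivN by blast
  have \<psi>P: "\<psi> t = poly P t" if "t \<ge> a" for t
  proof -
    have "1 + (t - a) / \<theta> \<ge> 1" using that \<theta>0 by simp
    then show ?thesis unfolding \<psi>_def using that by simp
  qed
  define w where "w = r - r0"
  have wa: "\<forall>k<N. poly ((pderiv ^^ k) w) a = 0" using r(2) r0a by (simp add: w_def hpd_diff)
  have wN: "\<forall>t\<in>{a..b}. \<bar>poly ((pderiv ^^ N) w) t\<bar> \<le> \<eta>"
  proof
    fix t assume t: "t \<in> {a..b}"
    have "poly ((pderiv ^^ N) w) t = poly Q t - \<psi> t"
      using t \<psi>P[of t] by (simp add: w_def hpd_diff r(1) P_def)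
    moreover have "t \<in> {0..b}" using t a0 by auto
    then have "\<bar>\<psi> t - poly Q t\<bar> < \<eta>" using Q by blast
    ultimately show "\<bar>poly ((pderiv ^^ N) w) t\<bar> \<le> \<eta>" by linarith
  qed
  have wk: "\<bar>poly ((pderiv ^^ k) w) t\<bar> \<le> \<eta> * Kb ^ N" if "k \<le> N" "t \<in> {a..b}" for k t
  proof -
    have aab: "a \<in> {a..b}" using ab by simp
    have all: "\<forall>m\<le>N. \<forall>t\<in>{a..b}. \<bar>poly ((pderiv ^^ (N - m)) w) t\<bar> \<le> \<eta> * (b - a) ^ m"
      by (rule imvt[OF aab wa wN])
    have kk: "N - (N - k) = k" using that(1) by simp
    have "\<bar>poly ((pderiv ^^ (N - (N - k))) w) t\<bar> \<le> \<eta> * (b - a) ^ (N - k)"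
      using all that(2) by simp
    then have "\<bar>poly ((pderiv ^^ k) w) t\<bar> \<le> \<eta> * (b - a) ^ (N - k)"
      unfolding kk .
    also have "\<dots> \<le> \<eta> * Kb ^ N"
    proof (rule mult_left_mono)
      have "(b - a) ^ (N - k) \<le> Kb ^ (N - k)" using ab a0 Kb1 by (intro power_mono) auto
      also have "\<dots> \<le> Kb ^ N" using Kb1 by (intro power_increasing) auto
      finally show "(b - a) ^ (N - k) \<le> Kb ^ N" .
    qed (use \<eta>0 in simp)
    finally show ?thesis .
  qed
  have part2: "\<forall>t\<in>{a..b}. \<bar>poly (Lop c N r) t - g t\<bar> \<le> \<epsilon>"
  proof
    fix t assume t: "t \<in> {a..b}"
    have "\<bar>poly (Lop c N w) t\<bar> \<le> (\<Sum>k\<le>N. \<bar>c k * poly ((pderiv ^^ k) w) t\<bar>)"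
      unfolding poly_Lop by (rule sum_abs)
    also have "\<dots> \<le> (\<Sum>k\<le>N. \<bar>c k\<bar> * (\<eta> * Kb ^ N))"
      by (intro sum_mono) (auto simp: abs_mult intro!: mult_left_mono wk t)
    also have "\<dots> = C * (\<eta> * Kb ^ N)" unfolding C_def by (rule sum_distrib_right[symmetric])
    also have "\<dots> \<le> \<epsilon> / 3"
    proof -
      have "C * (\<eta> * Kb ^ N) \<le> (C + 1) * (\<eta> * Kb ^ N)" using \<eta>0 KbN by simp
      also have "\<dots> = \<eta> * (3 * (C + 1) * Kb ^ N) / 3" by simp
      also have "\<dots> \<le> \<epsilon> / 3" using \<eta>2 by simp
      finally show ?thesis .
    qed
    finally have "\<bar>poly (Lop c N w) t\<bar> \<le> \<epsilon> / 3" .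
    moreover have "poly (Lop c N r) t - g t = poly (Lop c N w) t + (poly (Lop c N r0) t - g t)"
      by (simp add: w_def Lop_diff)
    ultimately show "\<bar>poly (Lop c N r) t - g t\<bar> \<le> \<epsilon>" using r0g[OF t] by linarith
  qed
  have part1: "\<forall>k<N. \<forall>t\<in>{0..a}. \<bar>poly ((pderiv ^^ k) r) t\<bar> \<le> \<delta>"
  proof (cases N)
    case 0
    then show ?thesis by simp
  next
    case (Suc N')
    define \<beta> where "\<beta> = (Mv + \<eta>) * \<theta> + \<eta> * b"
    have Qs: "\<bar>poly Q u\<bar> \<le> Mv + \<eta>" if "u \<in> {0..a}" for u
    proof -
      have "\<bar>\<psi> u\<bar> \<le> Mv"
      proof -
        have "\<psi> u = poly P a * min 1 (max 0 (1 + (u - a) / \<theta>))" unfolding \<psi>_def using that by simp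
        moreover have "\<bar>min 1 (max 0 (1 + (u - a) / \<theta>))\<bar> \<le> 1" by simp
        ultimately show ?thesis unfolding Mv_def by (simp add: abs_mult mult_left_le)
      qed
      moreover have "u \<in> {0..b}" using that ab by auto
      then have "\<bar>\<psi> u - poly Q u\<bar> < \<eta>" using Q by blast
      ultimately show ?thesis by linarith
    qed
    have Qs2: "\<bar>poly Q u\<bar> \<le> \<eta>" if "u \<in> {0..a - \<theta>}" for u
    proof -
      have "1 + (u - a) / \<theta> \<le> 0" using that \<theta>0 by (simp add: field_simps)
      then have "\<psi> u = 0" unfolding \<psi>_def by simp
      moreover have "u \<in> {0..b}" using that ab \<theta>0 by auto
      then have "\<bar>\<psi> u - poly Q u\<bar> < \<eta>" using Q by blast
      ultimately show ?thesis by simp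
    qed
    define V where "V = (pderiv ^^ N') r"
    have V': "pderiv V = Q" using r(1) Suc by (simp add: V_def)
    have Va: "poly V a = 0" using r(2) Suc by (simp add: V_def)
    have near: "\<bar>poly V t\<bar> \<le> (Mv + \<eta>) * \<theta>" if "t \<in> {0..a}" "t \<ge> a - \<theta>" for t
    proof -
      have "\<bar>poly V t - poly V a\<bar> \<le> (Mv + \<eta>) * \<bar>t - a\<bar>"
        by (rule poly_diff_bound[of "max 0 (a - \<theta>)" a]) (use V' Qs that a0 in auto)
      also have "\<dots> \<le> (Mv + \<eta>) * \<theta>" using that Mv0 \<eta>0 by (intro mult_left_mono) auto
      finally show ?thesis using Va by simp
    qed
    have Vb: "\<bar>poly V t\<bar> \<le> \<beta>" if t: "t \<in> {0..a}" for t
    proof (cases "t \<ge> a - \<theta>")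
      case True
      have "\<eta> * b \<ge> 0" using \<eta>0 a0 ab by simp
      then show ?thesis using near[OF t True] unfolding \<beta>_def by linarith
    next
      case False
      have s0: "a - \<theta> \<in> {0..a}" using False t \<theta>0 by auto
      have "\<bar>poly V t - poly V (a - \<theta>)\<bar> \<le> \<eta> * \<bar>t - (a - \<theta>)\<bar>"
        by (rule poly_diff_bound[of 0 "a - \<theta>"]) (use V' Qs2 False t s0 in auto)
      also have "\<dots> \<le> \<eta> * b" using False t s0 ab \<eta>0 by (intro mult_left_mono) auto
      finally show ?thesis using near[OF s0] unfolding \<beta>_def by simp
    qed
    have \<beta>K: "\<beta> * Kb ^ N \<le> \<delta>"
    proof -
      have "\<beta> * Kb ^ N = (Mv + \<eta>) * \<theta> * Kb ^ N + \<eta> * b * Kb ^ N" unfolding \<beta>_def by (simp add: algebra_simps)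
      also have "(Mv + \<eta>) * \<theta> * Kb ^ N \<le> (Mv + 1) * \<theta> * Kb ^ N"
        using \<eta>1 \<theta>0 KbN by (intro mult_right_mono) auto
      also have "\<eta> * b * Kb ^ N \<le> \<eta> * Kb * Kb ^ N"
        using Kb1 \<eta>0 KbN by (intro mult_right_mono mult_left_mono) auto
      finally show ?thesis using \<theta>1 \<eta>3 by (simp add: ac_simps)
    qed
    show ?thesis
    proof (intro allI impI ballI)
      fix k t assume k: "k < N" and t: "t \<in> {0..a}"
      have kN: "k \<le> N'" using k Suc by simp
      have "\<forall>m\<le>N'. \<forall>t\<in>{0..a}. \<bar>poly ((pderiv ^^ (N' - m)) r) t\<bar> \<le> \<beta> * (a - 0) ^ m"
      proof (rule imvt)
        show "a \<in> {0..a}" using a0 by simp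
        show "\<forall>k<N'. poly ((pderiv ^^ k) r) a = 0" using r(2) Suc by simp
        show "\<forall>t\<in>{0..a}. \<bar>poly ((pderiv ^^ N') r) t\<bar> \<le> \<beta>" using Vb unfolding V_def by blast
      qed
      then have "\<bar>poly ((pderiv ^^ (N' - (N' - k))) r) t\<bar> \<le> \<beta> * (a - 0) ^ (N' - k)"
        using t by simp
      then have "\<bar>poly ((pderiv ^^ k) r) t\<bar> \<le> \<beta> * a ^ (N' - k)"
        using kN by simp
      also have "\<dots> \<le> \<beta> * Kb ^ N"
      proof (rule mult_left_mono)
        have "a ^ (N' - k) \<le> Kb ^ (N' - k)" using ab a0 Kb1 by (intro power_mono) auto
        also have "\<dots> \<le> Kb ^ N" using Kb1 Suc by (intro power_increasing) auto
        finally show "a ^ (N' - k) \<le> Kb ^ N" .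
        show "0 \<le> \<beta>" using Vb[of a] a0 by simp
      qed
      finally show "\<bar>poly ((pderiv ^^ k) r) t\<bar> \<le> \<delta>" using \<beta>K by simp
    qed
  qed
  show ?thesis using part1 part2 by blast
qed

lemma xmono:
  assumes "\<forall>j<n. x j \<le> x (Suc j)" "i \<le> j" "j \<le> n"
  shows "x i \<le> (x j :: real)"
  using assms(2,3)
proof (induction j)
  case 0
  then show ?case by simp
next
  case (Suc j)
  show ?case
  proof (cases "i = Suc j")
    case False
    then have "x i \<le> x j" using Suc by simp
    also have "x j \<le> x (Suc j)" using assms(1) Suc.prems by simp
    finally show ?thesis .
  qed simp
qed

lemma main_real:
  fixes x :: "nat \<Rightarrow> real" and c :: "nat \<Rightarrow> nat \<Rightarrow> real" and f :: "nat \<Rightarrow> real \<Rightarrow> real"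
  assumes "x 0 = 0" "\<forall>j<n. x j \<le> x (Suc j)" "\<forall>j<n. \<forall>k\<le>j. c j k > 0" "\<forall>j<n. c j 0 = 1"
    "\<forall>j\<in>{1..n}. continuous_on {x (j - 1)..x j} (f j)" "\<epsilon> > 0"
  shows "\<exists>p. \<forall>j\<in>{1..n}. \<forall>t\<in>{x (j - 1)..x j}.
           \<bar>(\<Sum>k<j. c (j - 1) k * poly ((pderiv ^^ k) p) t) - f j t\<bar> \<le> \<epsilon>"
  using assms
proof (induction n arbitrary: \<epsilon>)
  case 0
  then show ?case by simp
next
  case (Suc n)
  have e2: "\<epsilon> / 2 > 0" using Suc.prems by simp
  obtain q where q: "\<forall>j\<in>{1..n}. \<forall>t\<in>{x (j - 1)..x j}.
           \<bar>(\<Sum>k<j. c (j - 1) k * poly ((pderiv ^^ k) q) t) - f j t\<bar> \<le> \<epsilon> / 2"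
    using Suc.IH[OF Suc.prems(1) _ _ _ _ e2] Suc.prems(2-5) by force
  define a where "a = x n"
  define b where "b = x (Suc n)"
  have a0: "0 \<le> a" unfolding a_def using xmono[OF Suc.prems(2), of 0 n] Suc.prems(1) by simp
  have ab: "a \<le> b" unfolding a_def b_def using Suc.prems(2) by simp
  define S where "S = (\<Sum>j\<le>n. \<Sum>k\<le>n. \<bar>c j k\<bar>)"
  have S0: "S \<ge> 0" unfolding S_def by (simp add: sum_nonneg)
  define \<delta> where "\<delta> = \<epsilon> / (2 * (S + 1))"
  have dl: "\<delta> > 0" unfolding \<delta>_def using Suc.prems(6) S0 by simp
  have dlS: "S * \<delta> \<le> \<epsilon> / 2"
  proof -
    have "S * \<delta> \<le> (S + 1) * \<delta>" using dl by simp
    also have "\<dots> = \<epsilon> / 2"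
    proof -
      have "S + 1 \<noteq> 0" using S0 by simp
      then show ?thesis unfolding \<delta>_def by (simp add: divide_simps)
    qed
    finally show ?thesis .
  qed
  define g where "g t = f (Suc n) t - (\<Sum>k<Suc n. c n k * poly ((pderiv ^^ k) q) t)" for t
  have gc: "continuous_on {a..b} g"
  proof -
    have "Suc n \<in> {1..Suc n}" by simp
    then have "continuous_on {x (Suc n - 1)..x (Suc n)} (f (Suc n))" using Suc.prems(5) by blast
    then have "continuous_on {a..b} (f (Suc n))" unfolding a_def b_def by simp
    then show ?thesis unfolding g_def by (intro continuous_intros) auto
  qed
  have c0: "c n 0 = 1" and cN: "c n n > 0" using Suc.prems(3,4) by auto
  obtain r where r1: "\<forall>k<n. \<forall>t\<in>{0..a}. \<bar>poly ((pderiv ^^ k) r) t\<bar> \<le> \<delta>"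
    and r2: "\<forall>t\<in>{a..b}. \<bar>poly (Lop (c n) n r) t - g t\<bar> \<le> \<epsilon> / 2"
    using KL[of "c n" n a b g "\<epsilon> / 2" \<delta>, OF c0 cN a0 ab gc e2 dl] by blast
  have lin: "(\<Sum>k<j. c (j - 1) k * poly ((pderiv ^^ k) (q + r)) t)
      = (\<Sum>k<j. c (j - 1) k * poly ((pderiv ^^ k) q) t) + (\<Sum>k<j. c (j - 1) k * poly ((pderiv ^^ k) r) t)" for j t
    by (simp add: higher_pderiv_add distrib_left sum.distrib)
  have "\<forall>j\<in>{1..Suc n}. \<forall>t\<in>{x (j - 1)..x j}.
           \<bar>(\<Sum>k<j. c (j - 1) k * poly ((pderiv ^^ k) (q + r)) t) - f j t\<bar> \<le> \<epsilon>"
  proof (intro ballI)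
    fix j t assume j: "j \<in> {1..Suc n}" and t: "t \<in> {x (j - 1)..x j}"
    show "\<bar>(\<Sum>k<j. c (j - 1) k * poly ((pderiv ^^ k) (q + r)) t) - f j t\<bar> \<le> \<epsilon>"
    proof (cases "j = Suc n")
      case True
      have ta: "t \<in> {a..b}" using t True unfolding a_def b_def by simp
      have "(\<Sum>k<j. c (j - 1) k * poly ((pderiv ^^ k) (q + r)) t) - f j t = poly (Lop (c n) n r) t - g t"
        unfolding lin poly_Lop g_def True by (simp add: lessThan_Suc_atMost)
      moreover have "\<bar>poly (Lop (c n) n r) t - g t\<bar> \<le> \<epsilon> / 2" using r2 ta by blast
      ultimately show ?thesis using Suc.prems(6) by simp
    next
      case False
      then have jn: "j \<in> {1..n}" using j by simp
      have t0: "t \<in> {0..a}"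
      proof -
        have "x 0 \<le> x (j - 1)" by (rule xmono[OF Suc.prems(2)]) (use jn in auto)
        moreover have "x j \<le> x n" by (rule xmono[OF Suc.prems(2)]) (use jn in auto)
        ultimately show ?thesis using t Suc.prems(1) unfolding a_def by auto
      qed
      have "\<bar>\<Sum>k<j. c (j - 1) k * poly ((pderiv ^^ k) r) t\<bar> \<le> (\<Sum>k<j. \<bar>c (j - 1) k\<bar> * \<delta>)"
      proof -
        have "\<bar>\<Sum>k<j. c (j - 1) k * poly ((pderiv ^^ k) r) t\<bar> \<le> (\<Sum>k<j. \<bar>c (j - 1) k * poly ((pderiv ^^ k) r) t\<bar>)"
          by (rule sum_abs)
        also have "\<dots> \<le> (\<Sum>k<j. \<bar>c (j - 1) k\<bar> * \<delta>)"
        proof (rule sum_mono)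
          fix k assume "k \<in> {..<j}"
          then have "k < n" using jn by auto
          then have "\<bar>poly ((pderiv ^^ k) r) t\<bar> \<le> \<delta>" using r1 t0 by blast
          then show "\<bar>c (j - 1) k * poly ((pderiv ^^ k) r) t\<bar> \<le> \<bar>c (j - 1) k\<bar> * \<delta>"
            unfolding abs_mult by (intro mult_left_mono) auto
        qed
        finally show ?thesis .
      qed
      also have "\<dots> = (\<Sum>k<j. \<bar>c (j - 1) k\<bar>) * \<delta>" by (rule sum_distrib_right[symmetric])
      also have "\<dots> \<le> S * \<delta>"
      proof (rule mult_right_mono)
        have "(\<Sum>k<j. \<bar>c (j - 1) k\<bar>) \<le> (\<Sum>k\<le>n. \<bar>c (j - 1) k\<bar>)"
          by (rule sum_mono2) (use jn in auto)
        also have "\<dots> \<le> S" unfolding S_def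
          by (rule member_le_sum[where i="j - 1" and f="\<lambda>i. \<Sum>k\<le>n. \<bar>c i k\<bar>"]) (use jn in \<open>auto intro: sum_nonneg\<close>)
        finally show "(\<Sum>k<j. \<bar>c (j - 1) k\<bar>) \<le> S" .
      qed (use dl in simp)
      finally have rb: "\<bar>\<Sum>k<j. c (j - 1) k * poly ((pderiv ^^ k) r) t\<bar> \<le> \<epsilon> / 2" using dlS by simp
      have qb: "\<bar>(\<Sum>k<j. c (j - 1) k * poly ((pderiv ^^ k) q) t) - f j t\<bar> \<le> \<epsilon> / 2"
        using q jn t by blast
      show ?thesis unfolding lin using rb qb by linarith
    qed
  qed
  then show ?case by blast
qed

lemma pderiv_map_of_real: "pderiv (map_poly complex_of_real p) = map_poly complex_of_real (pderiv p)"
  by (rule poly_eqI) (simp add: coeff_pderiv coeff_map_poly)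

lemma hpd_map_of_real: "(pderiv ^^ k) (map_poly complex_of_real p) = map_poly complex_of_real ((pderiv ^^ k) p)"
  by (induction k) (simp_all add: pderiv_map_of_real)

lemma poly_map_of_real: "poly (map_poly complex_of_real p) (complex_of_real t) = complex_of_real (poly p t)"
  by (induction p) (simp_all add: map_poly_pCons)

lemma ulim_from_bound:
  fixes F :: "nat \<Rightarrow> real \<Rightarrow> 'a::metric_space"
  assumes K: "K > 0" and b: "\<forall>m. \<forall>t\<in>S. dist (F m t) (l t) \<le> K / real (Suc m)"
  shows "uniform_limit S F l sequentially"
proof (rule uniform_limitI)
  fix e :: real assume e: "e > 0"
  obtain m0 where m0: "m0 > 0" "inverse (real m0) < e / K"
    using ex_inverse_of_nat_less[of "e / K"] e K by auto
  have "\<forall>t\<in>S. dist (F m t) (l t) < e" if "m \<ge> m0" for m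
  proof
    fix t assume t: "t \<in> S"
    have "K / real (Suc m) \<le> K / real m0"
      using that m0 K by (intro divide_left_mono) auto
    also have "\<dots> = K * inverse (real m0)" by (simp add: divide_inverse)
    also have "\<dots> < K * (e / K)" using m0 K by (intro mult_strict_left_mono) auto
    also have "\<dots> = e" using K by simp
    finally show "dist (F m t) (l t) < e" using b t by (meson le_less_trans)
  qed
  then show "\<forall>\<^sub>F m in sequentially. \<forall>t\<in>S. dist (F m t) (l t) < e"
    unfolding eventually_sequentially by blast
qed

lemma real_seq:
  fixes x :: "nat \<Rightarrow> real" and c :: "nat \<Rightarrow> nat \<Rightarrow> real" and f :: "nat \<Rightarrow> real \<Rightarrow> real"
  assumes "x 0 = 0" "\<forall>j<n. x j \<le> x (Suc j)" "\<forall>j<n. \<forall>k\<le>j. c j k > 0" "\<forall>j<n. c j 0 = 1"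
    "\<forall>j\<in>{1..n}. continuous_on {x (j - 1)..x j} (f j)"
  shows "\<exists>p. \<forall>m. \<forall>j\<in>{1..n}. \<forall>t\<in>{x (j - 1)..x j}.
           \<bar>(\<Sum>k<j. c (j - 1) k * poly ((pderiv ^^ k) (p m)) t) - f j t\<bar> \<le> 1 / real (Suc m)"
proof -
  have "\<forall>m. \<exists>p. \<forall>j\<in>{1..n}. \<forall>t\<in>{x (j - 1)..x j}.
           \<bar>(\<Sum>k<j. c (j - 1) k * poly ((pderiv ^^ k) p) t) - f j t\<bar> \<le> 1 / real (Suc m)"
    using main_real[OF assms] by simp
  then show ?thesis by (rule choice)
qed

theorem mainTheorem14:
  fixes b :: real and n :: nat and x :: "nat \<Rightarrow> real" and c :: "nat \<Rightarrow> nat \<Rightarrow> real"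
  assumes "b \<ge> 0" and "x 0 = 0" and "x n = b"
    and "\<forall>j<n. x j \<le> x (Suc j)"
    and "\<forall>j<n. \<forall>k\<le>j. c j k > 0"
    and "\<forall>j<n. c j 0 = 1"
  shows "(\<forall>f :: nat \<Rightarrow> real \<Rightarrow> real.
            (\<forall>j\<in>{1..n}. continuous_on {x (j - 1)..x j} (f j)) \<longrightarrow>
            (\<exists>p :: nat \<Rightarrow> real poly. \<forall>j\<in>{1..n}.
               uniform_limit {x (j - 1)..x j}
                 (\<lambda>m t. \<Sum>k<j. c (j - 1) k * poly ((pderiv ^^ k) (p m)) t)
                 (f j) sequentially))
       \<and> (\<forall>f :: nat \<Rightarrow> real \<Rightarrow> complex.
            (\<forall>j\<in>{1..n}. continuous_on {x (j - 1)..x j} (f j)) \<longrightarrow>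
            (\<exists>p :: nat \<Rightarrow> complex poly. \<forall>j\<in>{1..n}.
               uniform_limit {x (j - 1)..x j}
                 (\<lambda>m t. \<Sum>k<j. complex_of_real (c (j - 1) k) * poly ((pderiv ^^ k) (p m)) (complex_of_real t))
                 (f j) sequentially))"
proof (intro conjI allI impI)
  fix f :: "nat \<Rightarrow> real \<Rightarrow> real"
  assume fc: "\<forall>j\<in>{1..n}. continuous_on {x (j - 1)..x j} (f j)"
  obtain p where p: "\<forall>m. \<forall>j\<in>{1..n}. \<forall>t\<in>{x (j - 1)..x j}.
           \<bar>(\<Sum>k<j. c (j - 1) k * poly ((pderiv ^^ k) (p m)) t) - f j t\<bar> \<le> 1 / real (Suc m)"
    using real_seq[OF assms(2,4,5,6) fc] by blast
  show "\<exists>p :: nat \<Rightarrow> real poly. \<forall>j\<in>{1..n}.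
               uniform_limit {x (j - 1)..x j}
                 (\<lambda>m t. \<Sum>k<j. c (j - 1) k * poly ((pderiv ^^ k) (p m)) t)
                 (f j) sequentially"
  proof (intro exI ballI)
    fix j assume j: "j \<in> {1..n}"
    show "uniform_limit {x (j - 1)..x j} (\<lambda>m t. \<Sum>k<j. c (j - 1) k * poly ((pderiv ^^ k) (p m)) t) (f j) sequentially"
      by (rule ulim_from_bound[of 1]) (use p j in \<open>auto simp: dist_real_def\<close>)
  qed
next
  fix f :: "nat \<Rightarrow> real \<Rightarrow> complex"
  assume fc: "\<forall>j\<in>{1..n}. continuous_on {x (j - 1)..x j} (f j)"
  have fcR: "\<forall>j\<in>{1..n}. continuous_on {x (j - 1)..x j} (\<lambda>t. Re (f j t))"
    using fc by (auto intro: continuous_intros)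
  have fcI: "\<forall>j\<in>{1..n}. continuous_on {x (j - 1)..x j} (\<lambda>t. Im (f j t))"
    using fc by (auto intro: continuous_intros)
  obtain pR where pR: "\<forall>m. \<forall>j\<in>{1..n}. \<forall>t\<in>{x (j - 1)..x j}.
           \<bar>(\<Sum>k<j. c (j - 1) k * poly ((pderiv ^^ k) (pR m)) t) - Re (f j t)\<bar> \<le> 1 / real (Suc m)"
    using real_seq[OF assms(2,4,5,6) fcR] by blast
  obtain pI where pI: "\<forall>m. \<forall>j\<in>{1..n}. \<forall>t\<in>{x (j - 1)..x j}.
           \<bar>(\<Sum>k<j. c (j - 1) k * poly ((pderiv ^^ k) (pI m)) t) - Im (f j t)\<bar> \<le> 1 / real (Suc m)"
    using real_seq[OF assms(2,4,5,6) fcI] by blast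
  define p where "p m = map_poly complex_of_real (pR m) + smult \<i> (map_poly complex_of_real (pI m))" for m
  define SR where "SR m j t = (\<Sum>k<j. c (j - 1) k * poly ((pderiv ^^ k) (pR m)) t)" for m j t
  define SI where "SI m j t = (\<Sum>k<j. c (j - 1) k * poly ((pderiv ^^ k) (pI m)) t)" for m j t
  have eq: "(\<Sum>k<j. complex_of_real (c (j - 1) k) * poly ((pderiv ^^ k) (p m)) (complex_of_real t))
      = Complex (SR m j t) (SI m j t)" for m j t
  proof -
    have "(\<Sum>k<j. complex_of_real (c (j - 1) k) * poly ((pderiv ^^ k) (p m)) (complex_of_real t))
        = (\<Sum>k<j. complex_of_real (c (j - 1) k * poly ((pderiv ^^ k) (pR m)) t)
              + \<i> * complex_of_real (c (j - 1) k * poly ((pderiv ^^ k) (pI m)) t))"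
      unfolding p_def by (simp add: higher_pderiv_add higher_pderiv_smult hpd_map_of_real poly_map_of_real algebra_simps)
    also have "\<dots> = complex_of_real (SR m j t) + \<i> * complex_of_real (SI m j t)"
      unfolding SR_def SI_def by (simp add: sum.distrib sum_distrib_left)
    also have "\<dots> = Complex (SR m j t) (SI m j t)" by (simp add: Complex_eq)
    finally show ?thesis .
  qed
  show "\<exists>p :: nat \<Rightarrow> complex poly. \<forall>j\<in>{1..n}.
               uniform_limit {x (j - 1)..x j}
                 (\<lambda>m t. \<Sum>k<j. complex_of_real (c (j - 1) k) * poly ((pderiv ^^ k) (p m)) (complex_of_real t))
                 (f j) sequentially"
  proof (intro exI ballI)
    fix j assume j: "j \<in> {1..n}"
    have bd: "\<forall>m. \<forall>t\<in>{x (j - 1)..x j}. dist (\<Sum>k<j. complex_of_real (c (j - 1) k) * poly ((pderiv ^^ k) (p m)) (complex_of_real t)) (f j t) \<le> 2 / real (Suc m)"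
    proof (intro allI ballI)
      fix m t assume t: "t \<in> {x (j - 1)..x j}"
      have "dist (Complex (SR m j t) (SI m j t)) (f j t) = cmod (Complex (SR m j t) (SI m j t) - f j t)"
        by (simp add: dist_norm)
      also have "\<dots> \<le> \<bar>SR m j t - Re (f j t)\<bar> + \<bar>SI m j t - Im (f j t)\<bar>"
        using cmod_le[of "Complex (SR m j t) (SI m j t) - f j t"] by simp
      also have "\<dots> \<le> 1 / real (Suc m) + 1 / real (Suc m)"
        using pR pI j t unfolding SR_def SI_def by (intro add_mono) blast+
      also have "\<dots> = 2 / real (Suc m)" by simp
      finally show "dist (\<Sum>k<j. complex_of_real (c (j - 1) k) * poly ((pderiv ^^ k) (p m)) (complex_of_real t)) (f j t) \<le> 2 / real (Suc m)"
        unfolding eq .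
    qed
    show "uniform_limit {x (j - 1)..x j} (\<lambda>m t. \<Sum>k<j. complex_of_real (c (j - 1) k) * poly ((pderiv ^^ k) (p m)) (complex_of_real t)) (f j) sequentially"
      by (rule ulim_from_bound[of 2]) (use bd in auto)
  qed
qed

end
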